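(* The set of parallelogram polyominoes equals $Av_{\mathfrak{P}}\left(\begin{bmatrix}1&0\\1&1\end{bmatrix},\begin{bmatrix}1&1\\0&1\end{bmatrix}\right)$.
   Context: A polyomino is a finite union of unit cells of $\mathbb{Z}\times\mathbb{Z}$ that is connected via edge adjacency, up to translation, identified with the binary matrix of its minimal bounding rectangle (entry $1$ iff the corresponding unit square is a cell; rows numbered bottom to top, and in displayed matrices the first written row is the top row). A matrix is a submatrix of another if obtained by deleting rows and/or columns; $Av_{\mathfrak{P}}(\mathcal{M})$ is the set of polyominoes with no submatrix in $\mathcal{M}$. A parallelogram polyomino is a polyomino whose boundary can be decomposed into two lattice paths (upper and lower) made of north and east unit steps which meet only at their common starting and ending points. *)

theory Defs
  imports Main
begin

text \<open>A cell (x,y) is the unit square [x,x+1] x [y,y+1]; x is the column, y the row.\<close>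
type_synonym cell = "int \<times> int"

definition edge_adjacent :: "cell \<Rightarrow> cell \<Rightarrow> bool" where
  "edge_adjacent c d \<longleftrightarrow> \<bar>fst c - fst d\<bar> + \<bar>snd c - snd d\<bar> = 1"

definition polyomino :: "cell set \<Rightarrow> bool" where
  "polyomino P \<longleftrightarrow> finite P \<and> P \<noteq> {} \<and>
     (\<forall>c\<in>P. \<forall>d\<in>P. (c, d) \<in> {(a, b). a \<in> P \<and> b \<in> P \<and> edge_adjacent a b}\<^sup>*)"

text \<open>A binary matrix: (number of rows, number of columns, entries); row 0 is the bottom row.\<close>
type_synonym bmatrix = "nat \<times> nat \<times> (nat \<Rightarrow> nat \<Rightarrow> bool)"

text \<open>Matrix given as displayed: list of rows, first written row is the top row.\<close>
definition mat_of_rows :: "nat list list \<Rightarrow> bmatrix" where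
  "mat_of_rows rs = (length rs, length (hd rs),
     (\<lambda>i j. rs ! (length rs - 1 - i) ! j = 1))"

definition submatrix :: "bmatrix \<Rightarrow> bmatrix \<Rightarrow> bool" where
  "submatrix A B \<longleftrightarrow> (case A of (m, n, a) \<Rightarrow> case B of (p, q, b) \<Rightarrow>
     (\<exists>f g. strict_mono_on {..<m} f \<and> (\<forall>i<m. f i < p) \<and>
            strict_mono_on {..<n} g \<and> (\<forall>j<n. g j < q) \<and>
            (\<forall>i<m. \<forall>j<n. a i j = b (f i) (g j))))"

definition poly_matrix :: "cell set \<Rightarrow> bmatrix" where
  "poly_matrix P = (let xmin = Min (fst ` P); xmax = Max (fst ` P);
                        ymin = Min (snd ` P); ymax = Max (snd ` P)
     in (nat (ymax - ymin + 1), nat (xmax - xmin + 1),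
         (\<lambda>i j. (xmin + int j, ymin + int i) \<in> P)))"

definition Av_P :: "bmatrix set \<Rightarrow> cell set set" where
  "Av_P M = {P. polyomino P \<and> (\<forall>A\<in>M. \<not> submatrix A (poly_matrix P))}"

text \<open>Unit lattice edges: H (x,y) joins (x,y),(x+1,y); V (x,y) joins (x,y),(x,y+1).\<close>
datatype edge = H "int \<times> int" | V "int \<times> int"

definition cell_edges :: "cell \<Rightarrow> edge set" where
  "cell_edges c = (case c of (x, y) \<Rightarrow> {H (x, y), H (x, y + 1), V (x, y), V (x + 1, y)})"

definition boundary_edges :: "cell set \<Rightarrow> edge set" where
  "boundary_edges P = {e. card {c\<in>P. e \<in> cell_edges c} = 1}"

text \<open>Lattice paths with north (True) and east (False) unit steps.\<close>
fun step :: "int \<times> int \<Rightarrow> bool \<Rightarrow> int \<times> int" where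
  "step (x, y) True = (x, y + 1)"
| "step (x, y) False = (x + 1, y)"

fun path_points :: "int \<times> int \<Rightarrow> bool list \<Rightarrow> (int \<times> int) list" where
  "path_points p [] = [p]"
| "path_points p (s # ss) = p # path_points (step p s) ss"

fun path_edges :: "int \<times> int \<Rightarrow> bool list \<Rightarrow> edge set" where
  "path_edges p [] = {}"
| "path_edges p (True # ss) = insert (V p) (path_edges (step p True) ss)"
| "path_edges p (False # ss) = insert (H p) (path_edges (step p False) ss)"

definition path_end :: "int \<times> int \<Rightarrow> bool list \<Rightarrow> int \<times> int" where
  "path_end p ss = last (path_points p ss)"

definition parallelogram_polyomino :: "cell set \<Rightarrow> bool" where
  "parallelogram_polyomino P \<longleftrightarrow> polyomino P \<and>
     (\<exists>p u l. path_end p u = path_end p l \<and>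
        set (path_points p u) \<inter> set (path_points p l) = {p, path_end p u} \<and>
        path_edges p u \<inter> path_edges p l = {} \<and>
        boundary_edges P = path_edges p u \<union> path_edges p l)"

end

theory Submission
  imports Defs
begin


definition avoid :: "cell set \<Rightarrow> bool" where
 "avoid P \<longleftrightarrow> (\<forall>c1 c2 r1 r2. c1 < c2 \<longrightarrow> r1 < r2 \<longrightarrow>
   \<not>((c1,r1)\<in>P \<and> (c2,r1)\<in>P \<and> (c1,r2)\<in>P \<and> (c2,r2)\<notin>P) \<and>
   \<not>((c1,r1)\<notin>P \<and> (c2,r1)\<in>P \<and> (c1,r2)\<in>P \<and> (c2,r2)\<in>P))"

lemma sub22:
  "submatrix (2,2,a) (p,q,b) \<longleftrightarrow> (\<exists>i0 i1 j0 j1. i0<i1 \<and> i1<p \<and> j0<j1 \<and> j1<q \<and>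
     a 0 0 = b i0 j0 \<and> a 0 1 = b i0 j1 \<and> a 1 0 = b i1 j0 \<and> a 1 1 = b i1 j1)"
proof
  assume "submatrix (2,2,a) (p,q,b)"
  then obtain f g where f: "strict_mono_on {..<2} f" "\<forall>i<2. f i < p"
    and g: "strict_mono_on {..<2} g" "\<forall>j<2. g j < q"
    and e: "\<forall>i<2. \<forall>j<2. a i j = b (f i) (g j)"
    unfolding submatrix_def by blast
  have "f 0 < f 1" using f(1) by (auto simp: strict_mono_on_def)
  moreover have "g 0 < g 1" using g(1) by (auto simp: strict_mono_on_def)
  ultimately show "\<exists>i0 i1 j0 j1. i0<i1 \<and> i1<p \<and> j0<j1 \<and> j1<q \<and>
     a 0 0 = b i0 j0 \<and> a 0 1 = b i0 j1 \<and> a 1 0 = b i1 j0 \<and> a 1 1 = b i1 j1"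
    using f g e by (intro exI[of _ "f 0"] exI[of _ "f 1"] exI[of _ "g 0"] exI[of _ "g 1"]) auto
next
  assume "\<exists>i0 i1 j0 j1. i0<i1 \<and> i1<p \<and> j0<j1 \<and> j1<q \<and>
     a 0 0 = b i0 j0 \<and> a 0 1 = b i0 j1 \<and> a 1 0 = b i1 j0 \<and> a 1 1 = b i1 j1"
  then obtain i0 i1 j0 j1 where h: "i0<i1" "i1<p" "j0<j1" "j1<q"
     "a 0 0 = b i0 j0" "a 0 1 = b i0 j1" "a 1 0 = b i1 j0" "a 1 1 = b i1 j1" by blast
  define f where "f = (\<lambda>i::nat. if i = 0 then i0 else i1)"
  define g where "g = (\<lambda>i::nat. if i = 0 then j0 else j1)"
  have "strict_mono_on {..<2} f" "strict_mono_on {..<2} g"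
    using h by (auto simp: strict_mono_on_def f_def g_def)
  moreover have "\<forall>i<2. \<forall>j<2. a i j = b (f i) (g j)"
  proof (intro allI impI)
    fix i j :: nat assume "i < 2" "j < 2"
    then have "i = 0 \<or> i = 1" "j = 0 \<or> j = 1" by auto
    then show "a i j = b (f i) (g j)" using h by (auto simp: f_def g_def)
  qed
  moreover have "\<forall>i<2. f i < p" "\<forall>j<2. g j < q" using h by (auto simp: f_def g_def)
  ultimately show "submatrix (2,2,a) (p,q,b)" unfolding submatrix_def by blast
qed

lemma Sub1: "submatrix (mat_of_rows [[1, 0], [1, 1]]) (p,q,b) \<longleftrightarrow>
  (\<exists>i0 i1 j0 j1. i0<i1 \<and> i1<p \<and> j0<j1 \<and> j1<q \<and> b i0 j0 \<and> b i0 j1 \<and> b i1 j0 \<and> \<not> b i1 j1)"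
  unfolding mat_of_rows_def by (simp add: sub22[unfolded numeral_2_eq_2] numeral_2_eq_2)

lemma Sub2: "submatrix (mat_of_rows [[1, 1], [0, 1]]) (p,q,b) \<longleftrightarrow>
  (\<exists>i0 i1 j0 j1. i0<i1 \<and> i1<p \<and> j0<j1 \<and> j1<q \<and> \<not> b i0 j0 \<and> b i0 j1 \<and> b i1 j0 \<and> b i1 j1)"
  unfolding mat_of_rows_def by (simp add: sub22[unfolded numeral_2_eq_2] numeral_2_eq_2)

lemma pm_eq: "poly_matrix P = (nat (Max (snd ` P) - Min (snd ` P) + 1), nat (Max (fst ` P) - Min (fst ` P) + 1),
   (\<lambda>i j. (Min (fst ` P) + int j, Min (snd ` P) + int i) \<in> P))"
  unfolding poly_matrix_def Let_def by simp

lemma bounds: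
  assumes "finite P" "(x,y) \<in> P"
  shows "Min (fst ` P) \<le> x" "x \<le> Max (fst ` P)" "Min (snd ` P) \<le> y" "y \<le> Max (snd ` P)"
  using assms by (auto intro!: Min_le Max_ge simp: image_iff; force)+

lemma bounds':
  assumes "finite P" "a \<in> P"
  shows "Min (fst ` P) \<le> fst a" "fst a \<le> Max (fst ` P)" "Min (snd ` P) \<le> snd a" "snd a \<le> Max (snd ` P)"
  using assms by (auto intro!: Min_le Max_ge)

lemma pat_transfer:
  assumes fin: "finite P"
    and T: "\<And>c1 c2 r1 r2. Q c1 c2 r1 r2 \<Longrightarrow> (\<exists>a\<in>P. fst a \<le> c1) \<and> (\<exists>a\<in>P. c2 \<le> fst a) \<and> (\<exists>a\<in>P. snd a \<le> r1) \<and> (\<exists>a\<in>P. r2 \<le> snd a)"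
  shows "(\<exists>i0 i1 j0 j1. i0<i1 \<and> i1<nat (Max (snd ` P) - Min (snd ` P) + 1) \<and> j0<j1 \<and> j1<nat (Max (fst ` P) - Min (fst ` P) + 1) \<and>
      Q (Min (fst ` P) + int j0) (Min (fst ` P) + int j1) (Min (snd ` P) + int i0) (Min (snd ` P) + int i1))
    \<longleftrightarrow> (\<exists>c1 c2 r1 r2. c1 < c2 \<and> r1 < r2 \<and> Q c1 c2 r1 r2)" (is "?L \<longleftrightarrow> ?R")
proof
  assume ?L then show ?R by (metis add_le_cancel_left linorder_not_less of_nat_less_iff)
next
  assume ?R
  then obtain c1 c2 r1 r2 where h: "c1 < c2" "r1 < r2" "Q c1 c2 r1 r2" by blast
  obtain a1 a2 a3 a4 where b: "a1\<in>P" "a2\<in>P" "a3\<in>P" "a4\<in>P" "fst a1 \<le> c1" "c2 \<le> fst a2" "snd a3 \<le> r1" "r2 \<le> snd a4"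
    using T[OF h(3)] by blast
  note B1 = bounds'[OF fin b(1)] and B2 = bounds'[OF fin b(2)]
   and B3 = bounds'[OF fin b(3)] and B4 = bounds'[OF fin b(4)]
  let ?xm = "Min (fst ` P)" and ?ym = "Min (snd ` P)"
  show ?L
    apply (rule exI[of _ "nat (r1 - ?ym)"], rule exI[of _ "nat (r2 - ?ym)"],
           rule exI[of _ "nat (c1 - ?xm)"], rule exI[of _ "nat (c2 - ?xm)"])
    using h b B1 B2 B3 B4 by simp
qed

lemma Av_eq: "Av_P {mat_of_rows [[1, 0], [1, 1]], mat_of_rows [[1, 1], [0, 1]]} = {P. polyomino P \<and> avoid P}"
proof -
  have "(\<not> submatrix (mat_of_rows [[1, 0], [1, 1]]) (poly_matrix P) \<and>
         \<not> submatrix (mat_of_rows [[1, 1], [0, 1]]) (poly_matrix P)) \<longleftrightarrow> avoid P" if "finite P" for P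
  proof -
    have 1: "submatrix (mat_of_rows [[1, 0], [1, 1]]) (poly_matrix P) \<longleftrightarrow>
      (\<exists>c1 c2 r1 r2. c1 < c2 \<and> r1 < r2 \<and> ((c1,r1)\<in>P \<and> (c2,r1)\<in>P \<and> (c1,r2)\<in>P \<and> (c2,r2)\<notin>P))"
      unfolding pm_eq Sub1
      by (rule pat_transfer[OF that, where Q="\<lambda>c1 c2 r1 r2. (c1,r1)\<in>P \<and> (c2,r1)\<in>P \<and> (c1,r2)\<in>P \<and> (c2,r2)\<notin>P"]) force
    have 2: "submatrix (mat_of_rows [[1, 1], [0, 1]]) (poly_matrix P) \<longleftrightarrow>
      (\<exists>c1 c2 r1 r2. c1 < c2 \<and> r1 < r2 \<and> ((c1,r1)\<notin>P \<and> (c2,r1)\<in>P \<and> (c1,r2)\<in>P \<and> (c2,r2)\<in>P))"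
      unfolding pm_eq Sub2
      by (rule pat_transfer[OF that, where Q="\<lambda>c1 c2 r1 r2. (c1,r1)\<notin>P \<and> (c2,r1)\<in>P \<and> (c1,r2)\<in>P \<and> (c2,r2)\<in>P"]) force
    show ?thesis unfolding 1 2 avoid_def by blast
  qed
  then show ?thesis unfolding Av_P_def polyomino_def by auto
qed



lemma pe_ge: "V (x,y) \<in> path_edges p s \<Longrightarrow> fst p \<le> x \<and> snd p \<le> y"
proof (induction p s rule: path_edges.induct)
  case (2 p ss) then show ?case by (cases p) auto
next
  case (3 p ss) then show ?case by (cases p) auto
qed auto

lemma pe_mono: "V (x,y) \<in> path_edges p s \<Longrightarrow> V (x',y') \<in> path_edges p s \<Longrightarrow> y \<le> y' \<Longrightarrow> x \<le> x'"
proof (induction p s rule: path_edges.induct)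
  case (2 p ss)
  obtain a b where p: "p = (a,b)" by (cases p)
  show ?case using 2 pe_ge[of x y "(a,b+1)" ss] pe_ge[of x' y' "(a,b+1)" ss] p by auto
next
  case (3 p ss)
  obtain a b where p: "p = (a,b)" by (cases p)
  show ?case using 3 p by auto
qed auto

lemma pe_uniq: "V (x,y) \<in> path_edges p s \<Longrightarrow> V (x',y) \<in> path_edges p s \<Longrightarrow> x = x'"
  using pe_mono[of x y p s x' y] pe_mono[of x' y p s x y] by auto

lemma cells_V: "{c\<in>P. V (x,y) \<in> cell_edges c} = {(x,y),(x-1,y)} \<inter> P"
  by (auto simp: cell_edges_def split: prod.splits)

lemma cells_H: "{c\<in>P. H (x,y) \<in> cell_edges c} = {(x,y),(x,y-1)} \<inter> P"
  by (auto simp: cell_edges_def split: prod.splits)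

lemma card2: "a \<noteq> b \<Longrightarrow> card ({a,b} \<inter> P) = 1 \<longleftrightarrow> (a \<in> P) \<noteq> (b \<in> P)"
  by (cases "a \<in> P"; cases "b \<in> P") auto

lemma boundary_V: "V (x,y) \<in> boundary_edges P \<longleftrightarrow> ((x,y)\<in>P) \<noteq> ((x-1,y)\<in>P)"
  by (simp only: boundary_edges_def mem_Collect_eq cells_V) (rule card2, simp)

lemma boundary_H: "H (x,y) \<in> boundary_edges P \<longleftrightarrow> ((x,y)\<in>P) \<noteq> ((x,y-1)\<in>P)"
  by (simp only: boundary_edges_def mem_Collect_eq cells_H) (rule card2, simp)

lemma ivt_nat: fixes f :: "int \<Rightarrow> bool" shows "\<not> f x \<Longrightarrow> f (x + int n) \<Longrightarrow> \<exists>j. x < j \<and> j \<le> x + int n \<and> \<not> f (j-1) \<and> f j"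
proof (induction n)
  case 0 then show ?case by simp
next
  case (Suc n)
  show ?case
  proof (cases "f (x + int n)")
    case True
    then obtain j where "x < j \<and> j \<le> x + int n \<and> \<not> f (j-1) \<and> f j" using Suc by blast
    then show ?thesis by (intro exI[of _ j]) auto
  next
    case False
    then show ?thesis using Suc.prems by (intro exI[of _ "x + int (Suc n)"]) auto
  qed
qed

lemma ivt: fixes f :: "int \<Rightarrow> bool" shows "\<not> f x \<Longrightarrow> f z \<Longrightarrow> x \<le> z \<Longrightarrow> \<exists>j. x < j \<and> j \<le> z \<and> \<not> f (j-1) \<and> f j"
  using ivt_nat[of f x "nat (z - x)"] by simp

lemma outside_left: fixes P :: "cell set" shows "finite P \<Longrightarrow> \<exists>z<x. (z,y) \<notin> P"
proof -
  assume f: "finite P"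
  define z where "z = min (x - 1) (Min (fst ` P) - 1)"
  have "(z,y) \<notin> P"
  proof
    assume "(z,y) \<in> P"
    then have "z \<in> fst ` P" by force
    then have "Min (fst ` P) \<le> z" using f by (auto intro!: Min_le)
    then show False unfolding z_def by simp
  qed
  then show ?thesis by (intro exI[of _ z]) (auto simp: z_def)
qed

lemma outside_right: fixes P :: "cell set" shows "finite P \<Longrightarrow> \<exists>z>x. (z,y) \<notin> P"
proof -
  assume f: "finite P"
  define z where "z = max (x + 1) (Max (fst ` P) + 1)"
  have "(z,y) \<notin> P"
  proof
    assume "(z,y) \<in> P"
    then have "z \<in> fst ` P" by force
    then have "z \<le> Max (fst ` P)" using f by (auto intro!: Max_ge)
    then show False unfolding z_def by simp
  qed
  then show ?thesis by (intro exI[of _ z]) (auto simp: z_def)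
qed

lemma left_edge: "finite P \<Longrightarrow> (x,y) \<in> P \<Longrightarrow> \<exists>j\<le>x. V (j,y) \<in> boundary_edges P"
proof -
  assume f: "finite P" and xy: "(x,y)\<in>P"
  obtain z where "z < x" "(z,y)\<notin>P" using outside_left[OF f] by blast
  then obtain j where "z < j" "j \<le> x" "(j-1,y)\<notin>P" "(j,y)\<in>P"
    using ivt[of "\<lambda>t. (t,y)\<in>P" z x] xy by auto
  then show ?thesis by (auto simp: boundary_V)
qed

lemma right_edge: "finite P \<Longrightarrow> (x,y) \<in> P \<Longrightarrow> \<exists>j>x. V (j,y) \<in> boundary_edges P"
proof -
  assume f: "finite P" and xy: "(x,y)\<in>P"
  obtain z where "z > x" "(z,y)\<notin>P" using outside_right[OF f] by blast
  then obtain j where "x < j" "j \<le> z" "(j-1,y)\<in>P" "(j,y)\<notin>P"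
    using ivt[of "\<lambda>t. (t,y)\<notin>P" x z] xy by auto
  then show ?thesis by (auto simp: boundary_V)
qed

lemma mid_edge_out: "(x,y) \<in> P \<Longrightarrow> (z,y) \<notin> P \<Longrightarrow> x < z \<Longrightarrow> \<exists>j. x < j \<and> j \<le> z \<and> V (j,y) \<in> boundary_edges P"
  using ivt[of "\<lambda>t. (t,y)\<notin>P" x z] by (auto simp: boundary_V)

lemma mid_edge_in: "(x,y) \<notin> P \<Longrightarrow> (z,y) \<in> P \<Longrightarrow> x < z \<Longrightarrow> \<exists>j. x < j \<and> j \<le> z \<and> V (j,y) \<in> boundary_edges P"
  using ivt[of "\<lambda>t. (t,y)\<in>P" x z] by (auto simp: boundary_V)

lemma one_of_two:
  assumes "V (x,y) \<in> path_edges p u \<union> path_edges p l" "V (x',y) \<in> path_edges p u \<union> path_edges p l" "x \<noteq> x'"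
  shows "V (x,y) \<in> path_edges p u \<or> V (x',y) \<in> path_edges p u"
        "V (x,y) \<in> path_edges p l \<or> V (x',y) \<in> path_edges p l"
  using assms pe_uniq by blast+

theorem para_avoid:
  assumes "parallelogram_polyomino P" shows "avoid P"
proof -
  have fin: "finite P" using assms unfolding parallelogram_polyomino_def polyomino_def by blast
  obtain p u l where B: "boundary_edges P = path_edges p u \<union> path_edges p l"
    using assms unfolding parallelogram_polyomino_def by blast
  have any: "\<And>x y x' y' x''. V (x,y) \<in> boundary_edges P \<Longrightarrow> V (x',y') \<in> boundary_edges P \<Longrightarrow>
     V (x'',y') \<in> boundary_edges P \<Longrightarrow> x' \<noteq> x'' \<Longrightarrow> y \<le> y' \<Longrightarrow> x \<le> x' \<or> x \<le> x''"
  proof -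
    fix x y x' y' x'' assume a: "V (x,y) \<in> boundary_edges P" "V (x',y') \<in> boundary_edges P"
     "V (x'',y') \<in> boundary_edges P" "x' \<noteq> x''" "y \<le> y'"
    show "x \<le> x' \<or> x \<le> x''"
    proof (cases "V (x,y) \<in> path_edges p u")
      case True
      then show ?thesis using one_of_two(1)[of x' y' p u l x''] a B pe_mono by blast
    next
      case False
      then have "V (x,y) \<in> path_edges p l" using a B by blast
      then show ?thesis using one_of_two(2)[of x' y' p u l x''] a B pe_mono by blast
    qed
  qed
  have any2: "\<And>x y x' y' x''. V (x,y) \<in> boundary_edges P \<Longrightarrow> V (x',y') \<in> boundary_edges P \<Longrightarrow>
     V (x'',y') \<in> boundary_edges P \<Longrightarrow> x' \<noteq> x'' \<Longrightarrow> y' \<le> y \<Longrightarrow> x' \<le> x \<or> x'' \<le> x"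
  proof -
    fix x y x' y' x'' assume a: "V (x,y) \<in> boundary_edges P" "V (x',y') \<in> boundary_edges P"
     "V (x'',y') \<in> boundary_edges P" "x' \<noteq> x''" "y' \<le> y"
    show "x' \<le> x \<or> x'' \<le> x"
    proof (cases "V (x,y) \<in> path_edges p u")
      case True
      then show ?thesis using one_of_two(1)[of x' y' p u l x''] a B pe_mono by blast
    next
      case False
      then have "V (x,y) \<in> path_edges p l" using a B by blast
      then show ?thesis using one_of_two(2)[of x' y' p u l x''] a B pe_mono by blast
    qed
  qed
  show ?thesis unfolding avoid_def
  proof (intro allI impI conjI notI)
    fix c1 c2 r1 r2 :: int assume lt: "c1 < c2" "r1 < r2"
      and h: "(c1, r1) \<in> P \<and> (c2, r1) \<in> P \<and> (c1, r2) \<in> P \<and> (c2, r2) \<notin> P"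
    obtain k where k: "k > c2" "V (k,r1) \<in> boundary_edges P" using right_edge[OF fin] h by blast
    obtain j2 where j2: "c1 < j2" "j2 \<le> c2" "V (j2,r2) \<in> boundary_edges P" using mid_edge_out[of c1 r2 P c2] h lt by blast
    obtain j0 where j0: "j0 \<le> c1" "V (j0,r2) \<in> boundary_edges P" using left_edge[OF fin] h by blast
    show False using any[OF k(2) j0(2) j2(3)] k j2 j0 lt by linarith
  next
    fix c1 c2 r1 r2 :: int assume lt: "c1 < c2" "r1 < r2"
      and h: "(c1, r1) \<notin> P \<and> (c2, r1) \<in> P \<and> (c1, r2) \<in> P \<and> (c2, r2) \<in> P"
    obtain a where a: "a \<le> c1" "V (a,r2) \<in> boundary_edges P" using left_edge[OF fin] h by blast
    obtain j where j: "c1 < j" "j \<le> c2" "V (j,r1) \<in> boundary_edges P" using mid_edge_in[of c1 r1 P c2] h lt by blast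
    obtain k where k: "k > c2" "V (k,r1) \<in> boundary_edges P" using right_edge[OF fin] h by blast
    show False using any2[OF a(2) j(3) k(2)] a j k lt by linarith
  qed
qed



definition box :: "cell set \<Rightarrow> int \<Rightarrow> int \<Rightarrow> int \<Rightarrow> int \<Rightarrow> bool" where
  "box P x1 x2 y1 y2 \<longleftrightarrow> (\<forall>x y. x1 \<le> x \<longrightarrow> x \<le> x2 \<longrightarrow> y1 \<le> y \<longrightarrow> y \<le> y2 \<longrightarrow> (x,y) \<in> P)"

definition nwse :: "cell set \<Rightarrow> cell \<Rightarrow> cell \<Rightarrow> bool" where
  "nwse P a b \<longleftrightarrow> (fst a \<le> fst b \<longrightarrow> snd b \<le> snd a \<longrightarrow> box P (fst a) (fst b) (snd b) (snd a))"

definition adjR :: "cell set \<Rightarrow> (cell \<times> cell) set" where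
  "adjR W = {(a,b). a\<in>W \<and> b\<in>W \<and> edge_adjacent a b}"

lemma cut: "(a,b) \<in> (adjR W)\<^sup>* \<Longrightarrow> Q a \<Longrightarrow> \<not> Q b \<Longrightarrow> \<exists>c d. c\<in>W \<and> d\<in>W \<and> edge_adjacent c d \<and> Q c \<and> \<not> Q d"
proof (induction rule: rtrancl_induct)
  case base then show ?case by simp
next
  case (step y z)
  show ?case
  proof (cases "Q y")
    case True then show ?thesis using step unfolding adjR_def by blast
  next
    case False then show ?thesis using step by blast
  qed
qed

lemma adj_cases: "edge_adjacent (x,y) (x',y') \<Longrightarrow>
  (x' = x+1 \<and> y' = y) \<or> (x' = x-1 \<and> y' = y) \<or> (x' = x \<and> y' = y+1) \<or> (x' = x \<and> y' = y-1)"
  unfolding edge_adjacent_def by (simp add: abs_if split: if_splits) arith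

lemma adj_sym: "edge_adjacent a b \<Longrightarrow> edge_adjacent b a"
  unfolding edge_adjacent_def by (simp add: abs_minus_commute)

lemma av1: "avoid P \<Longrightarrow> c1 < c2 \<Longrightarrow> r1 < r2 \<Longrightarrow> (c1,r1)\<in>P \<Longrightarrow> (c2,r1)\<in>P \<Longrightarrow> (c1,r2)\<in>P \<Longrightarrow> (c2,r2)\<in>P"
  unfolding avoid_def by blast
lemma av2: "avoid P \<Longrightarrow> c1 < c2 \<Longrightarrow> r1 < r2 \<Longrightarrow> (c2,r1)\<in>P \<Longrightarrow> (c1,r2)\<in>P \<Longrightarrow> (c2,r2)\<in>P \<Longrightarrow> (c1,r1)\<in>P"
  unfolding avoid_def by blast

lemma nwseD: "nwse P (a,b) (c,d) \<Longrightarrow> a \<le> c \<Longrightarrow> d \<le> b \<Longrightarrow> box P a c d b"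
  unfolding nwse_def by simp

context
  fixes P :: "cell set" and W :: "cell set"
  assumes av: "avoid P" and WP: "W \<subseteq> P" and cl: "\<forall>a\<in>W. \<forall>b\<in>W. nwse P a b"
    and conn: "\<forall>a\<in>W. \<forall>b\<in>W. (a,b) \<in> (adjR W)\<^sup>*"
begin

lemma clD: "(a,b) \<in> W \<Longrightarrow> (c,d) \<in> W \<Longrightarrow> a \<le> c \<Longrightarrow> d \<le> b \<Longrightarrow> box P a c d b"
  using cl nwseD by blast

lemma cutW: "s \<in> W \<Longrightarrow> t \<in> W \<Longrightarrow> Q s \<Longrightarrow> \<not> Q t \<Longrightarrow> \<exists>c d. c\<in>W \<and> d\<in>W \<and> edge_adjacent c d \<and> Q c \<and> \<not> Q d"
  using cut conn by blast

lemma down1: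
  assumes d: "(ex,ey+1) \<in> W" and e: "(ex,ey) \<in> P" and t: "(tx,ty) \<in> W" "tx \<le> ex" "ey \<le> ty"
  shows "box P tx ex ey ty"
proof -
  have A: "box P sx ex ey sy" if s: "(sx,sy) \<in> W" "sx \<le> ex" "ey+1 \<le> sy" for sx sy
  proof -
    have b: "box P sx ex (ey+1) sy" using clD[OF s(1) d] s by simp
    show ?thesis unfolding box_def
    proof (intro allI impI)
      fix x y assume r: "sx \<le> x" "x \<le> ex" "ey \<le> y" "y \<le> sy"
      show "(x,y) \<in> P"
      proof (cases "y = ey")
        case True
        show ?thesis
        proof (cases "x = ex")
          case True then show ?thesis using e `y = ey` by simp
        next
          case False
          have "(x, ey+1) \<in> P" using b r s unfolding box_def by simp
          moreover have "(ex,ey+1) \<in> P" using d WP by blast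
          ultimately show ?thesis using av2[OF av, of x ex ey "ey+1"] e r False True by simp
        qed
      next
        case False then show ?thesis using b r unfolding box_def by simp
      qed
    qed
  qed
  show ?thesis
  proof (cases "ey + 1 \<le> ty")
    case True then show ?thesis using A t by simp
  next
    case False
    then have ty: "ty = ey" using t by simp
    obtain c c' where cc: "c\<in>W" "c'\<in>W" "edge_adjacent c c'" "snd c \<le> ey" "\<not> snd c' \<le> ey"
      using cutW[OF t(1) d, of "\<lambda>c. snd c \<le> ey"] ty by auto
    obtain sx where c: "c = (sx,ey)" "c' = (sx,ey+1)"
      using cc(3,4,5) adj_cases[of "fst c" "snd c" "fst c'" "snd c'"] by (cases c; cases c') auto
    have row: "(x,ey) \<in> P" if "tx \<le> x" "x \<le> ex" for x
    proof (cases "sx \<ge> tx")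
      case True
      have r1: "box P tx sx ey ey" using clD[OF t(1)[unfolded ty] cc(1)[unfolded c]] True by simp
      show ?thesis
      proof (cases "x \<le> sx")
        case True then show ?thesis using r1 that unfolding box_def by simp
      next
        case False
        have "box P sx ex ey (ey+1)" using A[of sx "ey+1"] cc(2) c False that by simp
        then show ?thesis using False that unfolding box_def by simp
      qed
    next
      case False
      have "box P sx ex ey (ey+1)" using A[of sx "ey+1"] cc(2) c False that t by simp
      then show ?thesis using False that unfolding box_def by simp
    qed
    show ?thesis unfolding box_def using row ty by auto
  qed
qed

lemma right1:
  assumes d: "(ex-1,ey) \<in> W" and e: "(ex,ey) \<in> P" and t: "(tx,ty) \<in> W" "tx \<le> ex" "ey \<le> ty"
  shows "box P tx ex ey ty"
proof -
  have A: "box P sx ex ey sy" if s: "(sx,sy) \<in> W" "sx \<le> ex - 1" "ey \<le> sy" for sx sy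
  proof -
    have b: "box P sx (ex-1) ey sy" using clD[OF s(1) d] s by simp
    show ?thesis unfolding box_def
    proof (intro allI impI)
      fix x y assume r: "sx \<le> x" "x \<le> ex" "ey \<le> y" "y \<le> sy"
      show "(x,y) \<in> P"
      proof (cases "x = ex")
        case True
        show ?thesis
        proof (cases "y = ey")
          case True then show ?thesis using e `x = ex` by simp
        next
          case False
          have "(ex-1, y) \<in> P" using b r s unfolding box_def by simp
          moreover have "(ex-1,ey) \<in> P" using d WP by blast
          ultimately show ?thesis using av1[OF av, of "ex-1" ex ey y] e r False True by simp
        qed
      next
        case False then show ?thesis using b r unfolding box_def by simp
      qed
    qed
  qed
  show ?thesis
  proof (cases "tx \<le> ex - 1")
    case True then show ?thesis using A t by simp
  next
    case False
    then have tx: "tx = ex" using t by simp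
    obtain c c' where cc: "c\<in>W" "c'\<in>W" "edge_adjacent c c'" "fst c \<le> ex - 1" "\<not> fst c' \<le> ex - 1"
      using cutW[OF d t(1), of "\<lambda>c. fst c \<le> ex - 1"] tx by auto
    obtain sy where c: "c = (ex-1,sy)" "c' = (ex,sy)"
      using cc(3,4,5) adj_cases[of "fst c" "snd c" "fst c'" "snd c'"] by (cases c; cases c') auto
    have col: "(ex,y) \<in> P" if "ey \<le> y" "y \<le> ty" for y
    proof (cases "sy \<le> ty")
      case True
      have r1: "box P ex ex sy ty" using clD[OF t(1)[unfolded tx] cc(2)[unfolded c]] True by simp
      show ?thesis
      proof (cases "sy \<le> y")
        case True then show ?thesis using r1 that unfolding box_def by simp
      next
        case False
        have "box P (ex-1) ex ey sy" using A[of "ex-1" sy] cc(1) c False that by simp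
        then show ?thesis using False that unfolding box_def by simp
      qed
    next
      case False
      have "box P (ex-1) ex ey sy" using A[of "ex-1" sy] cc(1) c False that by simp
      then show ?thesis using False that unfolding box_def by simp
    qed
    show ?thesis unfolding box_def using col tx by auto
  qed
qed

lemma up2:
  assumes d: "(ex,ey-1) \<in> W" and e: "(ex,ey) \<in> P" and t: "(tx,ty) \<in> W" "ex \<le> tx" "ty \<le> ey"
  shows "box P ex tx ty ey"
proof -
  have A: "box P ex sx sy ey" if s: "(sx,sy) \<in> W" "ex \<le> sx" "sy \<le> ey - 1" for sx sy
  proof -
    have b: "box P ex sx sy (ey-1)" using clD[OF d s(1)] s by simp
    show ?thesis unfolding box_def
    proof (intro allI impI)
      fix x y assume r: "ex \<le> x" "x \<le> sx" "sy \<le> y" "y \<le> ey"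
      show "(x,y) \<in> P"
      proof (cases "y = ey")
        case True
        show ?thesis
        proof (cases "x = ex")
          case True then show ?thesis using e `y = ey` by simp
        next
          case False
          have "(x, ey-1) \<in> P" using b r s unfolding box_def by simp
          moreover have "(ex,ey-1) \<in> P" using d WP by blast
          ultimately show ?thesis using av1[OF av, of ex x "ey-1" ey] e r False True by simp
        qed
      next
        case False then show ?thesis using b r unfolding box_def by simp
      qed
    qed
  qed
  show ?thesis
  proof (cases "ty \<le> ey - 1")
    case True then show ?thesis using A t by simp
  next
    case False
    then have ty: "ty = ey" using t by simp
    obtain c c' where cc: "c\<in>W" "c'\<in>W" "edge_adjacent c c'" "ey \<le> snd c" "\<not> ey \<le> snd c'"
      using cutW[OF t(1) d, of "\<lambda>c. ey \<le> snd c"] ty by auto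
    obtain sx where c: "c = (sx,ey)" "c' = (sx,ey-1)"
      using cc(3,4,5) adj_cases[of "fst c" "snd c" "fst c'" "snd c'"] by (cases c; cases c') auto
    have row: "(x,ey) \<in> P" if "ex \<le> x" "x \<le> tx" for x
    proof (cases "sx \<le> tx")
      case True
      have r1: "box P sx tx ey ey" using clD[OF cc(1)[unfolded c] t(1)[unfolded ty]] True by simp
      show ?thesis
      proof (cases "sx \<le> x")
        case True then show ?thesis using r1 that unfolding box_def by simp
      next
        case False
        have "box P ex sx (ey-1) ey" using A[of sx "ey-1"] cc(2) c False that by simp
        then show ?thesis using False that unfolding box_def by simp
      qed
    next
      case False
      have "box P ex sx (ey-1) ey" using A[of sx "ey-1"] cc(2) c False that t by simp
      then show ?thesis using False that unfolding box_def by simp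
    qed
    show ?thesis unfolding box_def using row ty by auto
  qed
qed

lemma left2:
  assumes d: "(ex+1,ey) \<in> W" and e: "(ex,ey) \<in> P" and t: "(tx,ty) \<in> W" "ex \<le> tx" "ty \<le> ey"
  shows "box P ex tx ty ey"
proof -
  have A: "box P ex sx sy ey" if s: "(sx,sy) \<in> W" "ex + 1 \<le> sx" "sy \<le> ey" for sx sy
  proof -
    have b: "box P (ex+1) sx sy ey" using clD[OF d s(1)] s by simp
    show ?thesis unfolding box_def
    proof (intro allI impI)
      fix x y assume r: "ex \<le> x" "x \<le> sx" "sy \<le> y" "y \<le> ey"
      show "(x,y) \<in> P"
      proof (cases "x = ex")
        case True
        show ?thesis
        proof (cases "y = ey")
          case True then show ?thesis using e `x = ex` by simp
        next
          case False
          have "(ex+1, y) \<in> P" using b r s unfolding box_def by simp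
          moreover have "(ex+1,ey) \<in> P" using d WP by blast
          ultimately show ?thesis using av2[OF av, of ex "ex+1" y ey] e r False True by simp
        qed
      next
        case False then show ?thesis using b r unfolding box_def by simp
      qed
    qed
  qed
  show ?thesis
  proof (cases "ex + 1 \<le> tx")
    case True then show ?thesis using A t by simp
  next
    case False
    then have tx: "tx = ex" using t by simp
    obtain c c' where cc: "c\<in>W" "c'\<in>W" "edge_adjacent c c'" "fst c \<le> ex" "\<not> fst c' \<le> ex"
      using cutW[OF t(1) d, of "\<lambda>c. fst c \<le> ex"] tx by auto
    obtain sy where c: "c = (ex,sy)" "c' = (ex+1,sy)"
      using cc(3,4,5) adj_cases[of "fst c" "snd c" "fst c'" "snd c'"] by (cases c; cases c') auto
    have col: "(ex,y) \<in> P" if "ty \<le> y" "y \<le> ey" for y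
    proof (cases "ty \<le> sy")
      case True
      have r1: "box P ex ex ty sy" using clD[OF cc(1)[unfolded c] t(1)[unfolded tx]] True by simp
      show ?thesis
      proof (cases "y \<le> sy")
        case True then show ?thesis using r1 that unfolding box_def by simp
      next
        case False
        have "box P ex (ex+1) sy ey" using A[of "ex+1" sy] cc(2) c False that by simp
        then show ?thesis using False that unfolding box_def by simp
      qed
    next
      case False
      have "box P ex (ex+1) sy ey" using A[of "ex+1" sy] cc(2) c False that by simp
      then show ?thesis using False that unfolding box_def by simp
    qed
    show ?thesis unfolding box_def using col tx by auto
  qed
qed

lemma step_nwse:
  assumes d: "d \<in> W" and e: "e \<in> P" and adj: "edge_adjacent d e" and t: "t \<in> W"
  shows "nwse P t e \<and> nwse P e t"
proof -
  obtain ex ey where E: "e = (ex,ey)" by (cases e)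
  obtain tx ty where T: "t = (tx,ty)" by (cases t)
  have cases: "d = (ex-1,ey) \<or> d = (ex+1,ey) \<or> d = (ex,ey-1) \<or> d = (ex,ey+1)"
    using adj_cases[of "fst d" "snd d" ex ey] adj E by (cases d) auto
  have tW: "(tx,ty) \<in> W" using t T by simp
  have eP: "(ex,ey) \<in> P" using e E by simp
  have 1: "box P tx ex ey ty" if "tx \<le> ex" "ey \<le> ty"
    using cases
  proof (elim disjE)
    assume "d = (ex-1,ey)" then show ?thesis using right1[of ex ey tx ty] d eP tW that by simp
  next
    assume "d = (ex+1,ey)"
    then have "box P tx (ex+1) ey ty" using clD[OF tW, of "ex+1" ey] d that by simp
    then show ?thesis unfolding box_def by simp
  next
    assume "d = (ex,ey-1)"
    then have "box P tx ex (ey-1) ty" using clD[OF tW, of ex "ey-1"] d that by simp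
    then show ?thesis unfolding box_def by simp
  next
    assume "d = (ex,ey+1)" then show ?thesis using down1[of ex ey tx ty] d eP tW that by simp
  qed
  have 2: "box P ex tx ty ey" if "ex \<le> tx" "ty \<le> ey"
    using cases
  proof (elim disjE)
    assume "d = (ex-1,ey)"
    then have "box P (ex-1) tx ty ey" using clD[OF _ tW, of "ex-1" ey] d that by simp
    then show ?thesis unfolding box_def by simp
  next
    assume "d = (ex+1,ey)" then show ?thesis using left2[of ex ey tx ty] d eP tW that by simp
  next
    assume "d = (ex,ey-1)" then show ?thesis using up2[of ex ey tx ty] d eP tW that by simp
  next
    assume "d = (ex,ey+1)"
    then have "box P ex tx ty (ey+1)" using clD[OF _ tW, of ex "ey+1"] d that by simp
    then show ?thesis unfolding box_def by simp
  qed
  show ?thesis unfolding nwse_def E T using 1 2 by simp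
qed

end

lemma nwse_refl: "a \<in> P \<Longrightarrow> nwse P a a"
  unfolding nwse_def box_def by (cases a) auto

lemma adjR_mono: "W \<subseteq> W' \<Longrightarrow> adjR W \<subseteq> adjR W'"
  unfolding adjR_def by auto

lemma grow:
  assumes av: "avoid P" and c: "c \<in> P" and path: "(c,d) \<in> (adjR P)\<^sup>*"
  shows "\<exists>W. W \<subseteq> P \<and> c \<in> W \<and> d \<in> W \<and> (\<forall>a\<in>W. \<forall>b\<in>W. nwse P a b) \<and> (\<forall>a\<in>W. \<forall>b\<in>W. (a,b) \<in> (adjR W)\<^sup>*)"
  using path
proof (induction rule: rtrancl_induct)
  case base
  show ?case using c nwse_refl by (intro exI[of _ "{c}"]) auto
next
  case (step d e)
  then obtain W where W: "W \<subseteq> P" "c \<in> W" "d \<in> W" "\<forall>a\<in>W. \<forall>b\<in>W. nwse P a b"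
      "\<forall>a\<in>W. \<forall>b\<in>W. (a,b) \<in> (adjR W)\<^sup>*" by blast
  have e: "e \<in> P" "edge_adjacent d e" using step(2) unfolding adjR_def by auto
  let ?W = "insert e W"
  have sub: "(adjR W)\<^sup>* \<subseteq> (adjR ?W)\<^sup>*" by (rule rtrancl_mono) (rule adjR_mono, blast)
  have "(d,e) \<in> adjR ?W" "(e,d) \<in> adjR ?W" using e W(3) adj_sym unfolding adjR_def by auto
  then have de: "(d,e) \<in> (adjR ?W)\<^sup>*" "(e,d) \<in> (adjR ?W)\<^sup>*" by auto
  have conn': "\<forall>a\<in>?W. \<forall>b\<in>?W. (a,b) \<in> (adjR ?W)\<^sup>*"
  proof (intro ballI)
    fix a b assume "a \<in> ?W" "b \<in> ?W"
    then show "(a,b) \<in> (adjR ?W)\<^sup>*"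
      using W(3,5) sub de by (auto intro: rtrancl_trans)
  qed
  have cl': "\<forall>a\<in>?W. \<forall>b\<in>?W. nwse P a b"
    using step_nwse[OF av W(1) W(4) W(5) W(3) e(1) e(2)] W(4) nwse_refl[OF e(1)] by blast
  show ?case using W e conn' cl' by (intro exI[of _ ?W]) auto
qed

theorem poly_nwse:
  assumes "polyomino P" "avoid P" "a \<in> P" "b \<in> P"
  shows "nwse P a b"
proof -
  have "(a,b) \<in> (adjR P)\<^sup>*" using assms(1,3,4) unfolding polyomino_def adjR_def by blast
  then show ?thesis using grow[OF assms(2,3)] by blast
qed



lemma pp_nonempty: "path_points p ss \<noteq> []"
  by (induction p ss rule: path_points.induct) auto

lemma pend_Nil[simp]: "path_end p [] = p" by (simp add: path_end_def)
lemma pend_Cons[simp]: "path_end p (s # ss) = path_end (step p s) ss"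
  by (simp add: path_end_def pp_nonempty)

lemma pend_app: "path_end p (xs @ ys) = path_end (path_end p xs) ys"
  by (induction xs arbitrary: p) auto

lemma pp_app: "set (path_points p (xs @ ys)) = set (path_points p xs) \<union> set (path_points (path_end p xs) ys)"
proof (induction xs arbitrary: p)
  case Nil then show ?case by (cases ys) auto
next
  case (Cons a xs) then show ?case by auto
qed

lemma pe_Cons: "path_edges p (s # ss) = insert (if s then V p else H p) (path_edges (step p s) ss)"
  by (cases s) auto

lemma pe_app: "path_edges p (xs @ ys) = path_edges p xs \<union> path_edges (path_end p xs) ys"
  by (induction xs arbitrary: p) (auto simp: pe_Cons)

lemma rep_end: "path_end (x,y) (replicate k False) = (x + int k, y)"
  by (induction k arbitrary: x) auto

lemma rep_pts: "set (path_points (x,y) (replicate k False)) = {(u,y') . y' = y \<and> x \<le> u \<and> u \<le> x + int k}"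
proof (induction k arbitrary: x)
  case 0 then show ?case by auto
next
  case (Suc k)
  have "set (path_points (x,y) (replicate (Suc k) False)) = insert (x,y) (set (path_points (x+1,y) (replicate k False)))"
    by simp
  also have "\<dots> = {(u,y') . y' = y \<and> x \<le> u \<and> u \<le> x + int (Suc k)}" using Suc by auto
  finally show ?case .
qed

lemma rep_edges: "path_edges (x,y) (replicate k False) = {H (u,y) | u. x \<le> u \<and> u < x + int k}"
proof (induction k arbitrary: x)
  case 0 then show ?case by auto
next
  case (Suc k)
  have "path_edges (x,y) (replicate (Suc k) False) = insert (H (x,y)) (path_edges (x+1,y) (replicate k False))"
    by simp
  also have "\<dots> = {H (u,y) | u. x \<le> u \<and> u < x + int (Suc k)}" using Suc by auto
  finally show ?case .
qed

fun mk :: "(int \<Rightarrow> int) \<Rightarrow> int \<Rightarrow> nat \<Rightarrow> int \<Rightarrow> bool list" where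
  "mk h y 0 x = replicate (nat (h y - x)) False"
| "mk h y (Suc n) x = replicate (nat (h y - x)) False @ True # mk h (y+1) n (h y)"

lemma mk_props:
  assumes "x \<le> h y" "\<forall>v. y \<le> v \<and> v < y + int n \<longrightarrow> h v \<le> h (v+1)"
  shows "path_end (x,y) (mk h y n x) = (h (y + int n), y + int n)
    \<and> set (path_points (x,y) (mk h y n x)) = {(u,v). y \<le> v \<and> v \<le> y + int n \<and> (if v = y then x else h (v-1)) \<le> u \<and> u \<le> h v}
    \<and> path_edges (x,y) (mk h y n x) = {H (u,v) | u v. y \<le> v \<and> v \<le> y + int n \<and> (if v = y then x else h (v-1)) \<le> u \<and> u < h v}
          \<union> {V (h v, v) | v. y \<le> v \<and> v < y + int n}"
  using assms
proof (induction n arbitrary: x y)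
  case 0
  have k: "x + int (nat (h y - x)) = h y" using 0 by simp
  show ?case using rep_end[of x y "nat (h y - x)"] rep_pts[of x y "nat (h y - x)"] rep_edges[of x y "nat (h y - x)"]
    unfolding k by auto
next
  case (Suc n)
  have k: "x + int (nat (h y - x)) = h y" using Suc by simp
  have h1: "h y \<le> h (y+1)" using Suc.prems(2) by auto
  have ifeq: "\<And>v. (if v = y + 1 then h y else h (v-1)) = h (v-1)" by auto
  have IH: "path_end (h y, y+1) (mk h (y+1) n (h y)) = (h (y + 1 + int n), y + 1 + int n)
    \<and> set (path_points (h y,y+1) (mk h (y+1) n (h y))) = {(u,v). y+1 \<le> v \<and> v \<le> y + 1 + int n \<and> h (v-1) \<le> u \<and> u \<le> h v}
    \<and> path_edges (h y,y+1) (mk h (y+1) n (h y)) = {H (u,v) | u v. y+1 \<le> v \<and> v \<le> y + 1 + int n \<and> h (v-1) \<le> u \<and> u < h v}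
          \<union> {V (h v, v) | v. y+1 \<le> v \<and> v < y + 1 + int n}"
    using Suc.IH[of "h y" "y+1"] h1 Suc.prems(2) unfolding ifeq by auto
  let ?R = "replicate (nat (h y - x)) False"
  have re: "path_end (x,y) ?R = (h y, y)" using rep_end[of x y "nat (h y - x)"] k by simp
  have mkS: "mk h y (Suc n) x = ?R @ (True # mk h (y+1) n (h y))" by simp
  have E: "path_end (x,y) (mk h y (Suc n) x) = (h (y + int (Suc n)), y + int (Suc n))"
    unfolding mkS pend_app re using IH by (simp add: add.assoc)
  have Pt0: "set (path_points (x,y) (mk h y (Suc n) x)) = {(u,v). v = y \<and> x \<le> u \<and> u \<le> h y} \<union> {(h y, y+1)}
     \<union> {(u,v). y+1 \<le> v \<and> v \<le> y + 1 + int n \<and> h (v-1) \<le> u \<and> u \<le> h v}"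
    unfolding mkS pp_app re using IH rep_pts[of x y "nat (h y - x)"] k h1 by auto
  have Pt: "set (path_points (x,y) (mk h y (Suc n) x)) = {(u,v). y \<le> v \<and> v \<le> y + int (Suc n) \<and> (if v = y then x else h (v-1)) \<le> u \<and> u \<le> h v}"
    unfolding Pt0
  proof (rule set_eqI)
    fix c :: cell
    obtain u v where c: "c = (u,v)" by (cases c)
    show "c \<in> {(u,v). v = y \<and> x \<le> u \<and> u \<le> h y} \<union> {(h y, y+1)}
     \<union> {(u,v). y+1 \<le> v \<and> v \<le> y + 1 + int n \<and> h (v-1) \<le> u \<and> u \<le> h v} \<longleftrightarrow>
      c \<in> {(u,v). y \<le> v \<and> v \<le> y + int (Suc n) \<and> (if v = y then x else h (v-1)) \<le> u \<and> u \<le> h v}"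
      unfolding c using h1 by (cases "v = y"; cases "v = y + 1") auto
  qed
  have Ed0: "path_edges (x,y) (mk h y (Suc n) x) = {H (u,y) | u. x \<le> u \<and> u < h y} \<union> {V (h y, y)} \<union>
     ({H (u,v) | u v. y+1 \<le> v \<and> v \<le> y + 1 + int n \<and> h (v-1) \<le> u \<and> u < h v}
          \<union> {V (h v, v) | v. y+1 \<le> v \<and> v < y + 1 + int n})"
    unfolding mkS pe_app re using IH rep_edges[of x y "nat (h y - x)"] k by auto
  have Ed: "path_edges (x,y) (mk h y (Suc n) x) = {H (u,v) | u v. y \<le> v \<and> v \<le> y + int (Suc n) \<and> (if v = y then x else h (v-1)) \<le> u \<and> u < h v}
          \<union> {V (h v, v) | v. y \<le> v \<and> v < y + int (Suc n)}"
    unfolding Ed0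
  proof (rule set_eqI)
    fix e :: edge
    show "e \<in> {H (u,y) | u. x \<le> u \<and> u < h y} \<union> {V (h y, y)} \<union>
     ({H (u,v) | u v. y+1 \<le> v \<and> v \<le> y + 1 + int n \<and> h (v-1) \<le> u \<and> u < h v}
          \<union> {V (h v, v) | v. y+1 \<le> v \<and> v < y + 1 + int n}) \<longleftrightarrow>
       e \<in> {H (u,v) | u v. y \<le> v \<and> v \<le> y + int (Suc n) \<and> (if v = y then x else h (v-1)) \<le> u \<and> u < h v}
          \<union> {V (h v, v) | v. y \<le> v \<and> v < y + int (Suc n)}"
    proof (cases e)
      case (H c)
      obtain u v where c: "c = (u,v)" by (cases c)
      show ?thesis unfolding H c by (cases "v = y") auto
    next
      case (V c)
      obtain u v where c: "c = (u,v)" by (cases c)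
      show ?thesis unfolding V c by (cases "v = y") auto
    qed
  qed
  show ?case using E Pt Ed by blast
qed



lemma construct:
  fixes a b :: "int \<Rightarrow> int" and y0 y1 :: int and P :: "cell set"
  assumes y: "y0 \<le> y1" and ne: "\<forall>y. y0 \<le> y \<and> y \<le> y1 \<longrightarrow> a y \<le> b y"
    and mo: "\<forall>y. y0 \<le> y \<and> y < y1 \<longrightarrow> a y \<le> a (y+1) \<and> b y \<le> b (y+1) \<and> a (y+1) \<le> b y"
    and P: "P = {(x,y). y0 \<le> y \<and> y \<le> y1 \<and> a y \<le> x \<and> x \<le> b y}"
  shows "\<exists>p u l. path_end p u = path_end p l \<and>
        set (path_points p u) \<inter> set (path_points p l) = {p, path_end p u} \<and>
        path_edges p u \<inter> path_edges p l = {} \<and>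
        boundary_edges P = path_edges p u \<union> path_edges p l"
proof -
  define n where "n = nat (y1 - y0 + 1)"
  have n: "y0 + int n = y1 + 1" using y by (simp add: n_def)
  define hU where "hU = (\<lambda>v. if v \<le> y1 then a v else b y1 + 1)"
  define hL where "hL = (\<lambda>v. if v \<le> y1 then b v + 1 else b y1 + 1)"
  have U: "path_end (a y0,y0) (mk hU y0 n (a y0)) = (hU (y0 + int n), y0 + int n)
    \<and> set (path_points (a y0,y0) (mk hU y0 n (a y0))) = {(u,v). y0 \<le> v \<and> v \<le> y0 + int n \<and> (if v = y0 then a y0 else hU (v-1)) \<le> u \<and> u \<le> hU v}
    \<and> path_edges (a y0,y0) (mk hU y0 n (a y0)) = {H (u,v) | u v. y0 \<le> v \<and> v \<le> y0 + int n \<and> (if v = y0 then a y0 else hU (v-1)) \<le> u \<and> u < hU v}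
          \<union> {V (hU v, v) | v. y0 \<le> v \<and> v < y0 + int n}"
  proof (rule mk_props)
    show "a y0 \<le> hU y0" using y by (simp add: hU_def)
    show "\<forall>v. y0 \<le> v \<and> v < y0 + int n \<longrightarrow> hU v \<le> hU (v + 1)"
    proof (intro allI impI)
      fix v assume v: "y0 \<le> v \<and> v < y0 + int n"
      show "hU v \<le> hU (v + 1)"
      proof (cases "v + 1 \<le> y1")
        case True then show ?thesis using mo v by (simp add: hU_def)
      next
        case False then have "v = y1" using v n by simp
        moreover have "a y1 \<le> b y1" using ne y by auto
        ultimately show ?thesis by (simp add: hU_def)
      qed
    qed
  qed
  have L: "path_end (a y0,y0) (mk hL y0 n (a y0)) = (hL (y0 + int n), y0 + int n)
    \<and> set (path_points (a y0,y0) (mk hL y0 n (a y0))) = {(u,v). y0 \<le> v \<and> v \<le> y0 + int n \<and> (if v = y0 then a y0 else hL (v-1)) \<le> u \<and> u \<le> hL v}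
    \<and> path_edges (a y0,y0) (mk hL y0 n (a y0)) = {H (u,v) | u v. y0 \<le> v \<and> v \<le> y0 + int n \<and> (if v = y0 then a y0 else hL (v-1)) \<le> u \<and> u < hL v}
          \<union> {V (hL v, v) | v. y0 \<le> v \<and> v < y0 + int n}"
  proof (rule mk_props)
    show "a y0 \<le> hL y0" using y ne[rule_format, of y0] by (simp add: hL_def)
    show "\<forall>v. y0 \<le> v \<and> v < y0 + int n \<longrightarrow> hL v \<le> hL (v + 1)"
    proof (intro allI impI)
      fix v assume v: "y0 \<le> v \<and> v < y0 + int n"
      show "hL v \<le> hL (v + 1)"
      proof (cases "v + 1 \<le> y1")
        case True then show ?thesis using mo v by (simp add: hL_def)
      next
        case False then have "v = y1" using v n by simp
        then show ?thesis by (simp add: hL_def)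
      qed
    qed
  qed
  define p where "p = (a y0, y0)"
  define u where "u = mk hU y0 n (a y0)"
  define l where "l = mk hL y0 n (a y0)"
  have Ue: "path_end p u = (b y1 + 1, y1 + 1)" using U unfolding p_def u_def n hU_def by simp
  have Le: "path_end p l = (b y1 + 1, y1 + 1)" using L unfolding p_def l_def n hL_def by simp
  have Up: "set (path_points p u) = {(u,v). y0 \<le> v \<and> v \<le> y1 + 1 \<and> (if v = y0 then a y0 else hU (v-1)) \<le> u \<and> u \<le> hU v}"
    using U unfolding p_def u_def n by simp
  have Lp: "set (path_points p l) = {(u,v). y0 \<le> v \<and> v \<le> y1 + 1 \<and> (if v = y0 then a y0 else hL (v-1)) \<le> u \<and> u \<le> hL v}"
    using L unfolding p_def l_def n by simp
  have Ued: "path_edges p u = {H (u,v) | u v. y0 \<le> v \<and> v \<le> y1 + 1 \<and> (if v = y0 then a y0 else hU (v-1)) \<le> u \<and> u < hU v}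
          \<union> {V (hU v, v) | v. y0 \<le> v \<and> v < y1 + 1}"
    using U unfolding p_def u_def n by simp
  have Led: "path_edges p l = {H (u,v) | u v. y0 \<le> v \<and> v \<le> y1 + 1 \<and> (if v = y0 then a y0 else hL (v-1)) \<le> u \<and> u < hL v}
          \<union> {V (hL v, v) | v. y0 \<le> v \<and> v < y1 + 1}"
    using L unfolding p_def l_def n by simp
  have hU1: "\<And>v. v \<le> y1 \<Longrightarrow> hU v = a v" "\<And>v. \<not> v \<le> y1 \<Longrightarrow> hU v = b y1 + 1" by (auto simp: hU_def)
  have hL1: "\<And>v. v \<le> y1 \<Longrightarrow> hL v = b v + 1" "\<And>v. \<not> v \<le> y1 \<Longrightarrow> hL v = b y1 + 1" by (auto simp: hL_def)
  have regions: "\<And>v::int. v < y0 \<or> v = y0 \<or> (y0 < v \<and> v \<le> y1) \<or> v = y1 + 1 \<or> y1 + 1 < v" using y by arith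
  have UP: "(x,v) \<in> set (path_points p u) \<longleftrightarrow> (v = y0 \<and> x = a y0) \<or> (y0 < v \<and> v \<le> y1 \<and> a (v-1) \<le> x \<and> x \<le> a v)
      \<or> (v = y1 + 1 \<and> a y1 \<le> x \<and> x \<le> b y1 + 1)" for x v
    unfolding Up using regions[of v] y hU1 by auto
  have LP: "(x,v) \<in> set (path_points p l) \<longleftrightarrow> (v = y0 \<and> a y0 \<le> x \<and> x \<le> b y0 + 1) \<or> (y0 < v \<and> v \<le> y1 \<and> b (v-1) + 1 \<le> x \<and> x \<le> b v + 1)
      \<or> (v = y1 + 1 \<and> x = b y1 + 1)" for x v
    unfolding Lp using regions[of v] y hL1 by auto
  have UH: "H (x,v) \<in> path_edges p u \<longleftrightarrow> (y0 < v \<and> v \<le> y1 \<and> a (v-1) \<le> x \<and> x < a v)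
      \<or> (v = y1 + 1 \<and> a y1 \<le> x \<and> x < b y1 + 1)" for x v
    unfolding Ued using regions[of v] y hU1 by auto
  have LH: "H (x,v) \<in> path_edges p l \<longleftrightarrow> (v = y0 \<and> a y0 \<le> x \<and> x < b y0 + 1) \<or> (y0 < v \<and> v \<le> y1 \<and> b (v-1) + 1 \<le> x \<and> x < b v + 1)" for x v
    unfolding Led using regions[of v] y hL1 by auto
  have UV: "V (x,v) \<in> path_edges p u \<longleftrightarrow> y0 \<le> v \<and> v \<le> y1 \<and> x = a v" for x v
    unfolding Ued using hU1 by auto
  have LV: "V (x,v) \<in> path_edges p l \<longleftrightarrow> y0 \<le> v \<and> v \<le> y1 \<and> x = b v + 1" for x v
    unfolding Led using hL1 by auto
  have c1: "set (path_points p u) \<inter> set (path_points p l) = {p, path_end p u}"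
  proof (rule set_eqI)
    fix c :: cell
    obtain x v where c: "c = (x,v)" by (cases c)
    have m: "y0 \<le> v - 1 \<and> v - 1 < y1 \<longrightarrow> a (v-1) \<le> a v \<and> b (v-1) \<le> b v \<and> a v \<le> b (v-1)"
      using mo[rule_format, of "v-1"] by simp
    have n1: "y0 \<le> v \<and> v \<le> y1 \<longrightarrow> a v \<le> b v" "a y0 \<le> b y0" "a y1 \<le> b y1" using ne y by auto
    show "c \<in> set (path_points p u) \<inter> set (path_points p l) \<longleftrightarrow> c \<in> {p, path_end p u}"
      unfolding c Ue IntI Int_iff UP LP using m n1 y by (auto simp: p_def)
  qed
  have c2: "path_edges p u \<inter> path_edges p l = {}"
  proof (rule equals0I)
    fix e assume e: "e \<in> path_edges p u \<inter> path_edges p l"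
    show False
    proof (cases e)
      case (H c)
      obtain x v where c: "c = (x,v)" by (cases c)
      have m: "y0 \<le> v - 1 \<and> v - 1 < y1 \<longrightarrow> a (v-1) \<le> a v \<and> b (v-1) \<le> b v \<and> a v \<le> b (v-1)"
        using mo[rule_format, of "v-1"] by simp
      show False using e unfolding H c Int_iff UH LH using m y by auto
    next
      case (V c)
      obtain x v where c: "c = (x,v)" by (cases c)
      have n1: "y0 \<le> v \<and> v \<le> y1 \<longrightarrow> a v \<le> b v" using ne by auto
      show False using e unfolding V c Int_iff UV LV using n1 by auto
    qed
  qed
  have c3: "boundary_edges P = path_edges p u \<union> path_edges p l"
  proof (rule set_eqI)
    fix e
    show "e \<in> boundary_edges P \<longleftrightarrow> e \<in> path_edges p u \<union> path_edges p l"
    proof (cases e)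
      case (H c)
      obtain x v where c: "c = (x,v)" by (cases c)
      have m: "y0 \<le> v - 1 \<and> v - 1 < y1 \<longrightarrow> a (v-1) \<le> a v \<and> b (v-1) \<le> b v \<and> a v \<le> b (v-1)"
        using mo[rule_format, of "v-1"] by simp
      have n1: "y0 \<le> v \<and> v \<le> y1 \<longrightarrow> a v \<le> b v" "a y0 \<le> b y0" "a y1 \<le> b y1" using ne y by auto
      have r: "v < y0 \<or> v = y0 \<or> (y0 < v \<and> v \<le> y1) \<or> v = y1 + 1 \<or> y1 + 1 < v" using regions .
      show ?thesis unfolding H c boundary_H Un_iff UH LH P using r m n1 y
        by (elim disjE; auto)
    next
      case (V c)
      obtain x v where c: "c = (x,v)" by (cases c)
      have n1: "y0 \<le> v \<and> v \<le> y1 \<longrightarrow> a v \<le> b v" using ne by auto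
      show ?thesis unfolding V c boundary_V Un_iff UV LV P using n1 by auto
    qed
  qed
  have "path_end p u = path_end p l \<and>
        set (path_points p u) \<inter> set (path_points p l) = {p, path_end p u} \<and>
        path_edges p u \<inter> path_edges p l = {} \<and>
        boundary_edges P = path_edges p u \<union> path_edges p l" using Ue Le c1 c2 c3 by simp
  then show "\<exists>p u l. path_end p u = path_end p l \<and>
        set (path_points p u) \<inter> set (path_points p l) = {p, path_end p u} \<and>
        path_edges p u \<inter> path_edges p l = {} \<and>
        boundary_edges P = path_edges p u \<union> path_edges p l" by blast
qed



theorem avoid_para:
  assumes poly: "polyomino P" and av: "avoid P"
  shows "parallelogram_polyomino P"
proof -
  have fin: "finite P" and nemp: "P \<noteq> {}" using poly unfolding polyomino_def by auto
  have conn: "\<forall>c\<in>P. \<forall>d\<in>P. (c,d) \<in> (adjR P)\<^sup>*" using poly unfolding polyomino_def adjR_def by blast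
  have NW: "\<And>c d. c \<in> P \<Longrightarrow> d \<in> P \<Longrightarrow> nwse P c d" using poly_nwse[OF poly av] by blast
  define Y0 where "Y0 = Min (snd ` P)"
  define Y1 where "Y1 = Max (snd ` P)"
  obtain c0 where c0: "c0 \<in> P" "snd c0 = Y0" unfolding Y0_def using fin nemp
    by (metis (no_types, lifting) Min_in finite_imageI image_iff image_is_empty)
  obtain c1 where c1: "c1 \<in> P" "snd c1 = Y1" unfolding Y1_def using fin nemp
    by (metis (no_types, lifting) Max_in finite_imageI image_iff image_is_empty)
  have rng: "\<And>x y. (x,y) \<in> P \<Longrightarrow> Y0 \<le> y \<and> y \<le> Y1" using bounds[OF fin] unfolding Y0_def Y1_def by blast
  have "(fst c0, snd c0) \<in> P" using c0(1) by simp
  then have Y: "Y0 \<le> Y1" using c0 rng by blast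
  have cross: "\<exists>x. (x,y) \<in> P \<and> (x,y+1) \<in> P" if yy: "Y0 \<le> y" "y < Y1" for y
  proof -
    obtain c c' where cc: "c\<in>P" "c'\<in>P" "edge_adjacent c c'" "snd c \<le> y" "\<not> snd c' \<le> y"
      using cut[of c0 c1 P "\<lambda>c. snd c \<le> y"] conn c0 c1 yy by auto
    obtain x where "c = (x,y)" "c' = (x,y+1)"
      using cc(3,4,5) adj_cases[of "fst c" "snd c" "fst c'" "snd c'"] by (cases c; cases c') auto
    then show ?thesis using cc by blast
  qed
  define R where "R = (\<lambda>y. {x. (x,y) \<in> P})"
  have Rfin: "finite (R y)" for y
  proof -
    have "R y \<subseteq> fst ` P" unfolding R_def by force
    then show ?thesis using fin finite_subset by blast
  qed
  have Rne: "R y \<noteq> {}" if "Y0 \<le> y" "y \<le> Y1" for y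
  proof (cases "y = Y1")
    case True then show ?thesis using c1 unfolding R_def by (cases c1) auto
  next
    case False then show ?thesis using cross[of y] that unfolding R_def by auto
  qed
  define a where "a = (\<lambda>y. Min (R y))"
  define b where "b = (\<lambda>y. Max (R y))"
  have aP: "(a y, y) \<in> P" and bP: "(b y, y) \<in> P" if "Y0 \<le> y" "y \<le> Y1" for y
    using Min_in[OF Rfin Rne[OF that]] Max_in[OF Rfin Rne[OF that]] unfolding a_def b_def R_def by auto
  have abound: "a y \<le> x" "x \<le> b y" if "(x,y) \<in> P" for x y
    using Min_le[OF Rfin, of x y] Max_ge[OF Rfin, of x y] that unfolding a_def b_def R_def by auto
  have interval: "(x,y) \<in> P" if "Y0 \<le> y" "y \<le> Y1" "a y \<le> x" "x \<le> b y" for x y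
  proof -
    have "box P (a y) (b y) y y" using NW[OF aP bP, OF that(1,2) that(1,2)] that nwseD[of P "a y" y "b y" y] by simp
    then show ?thesis using that unfolding box_def by simp
  qed
  have Peq: "P = {(x,y). Y0 \<le> y \<and> y \<le> Y1 \<and> a y \<le> x \<and> x \<le> b y}"
    using rng abound interval by auto
  have ne: "\<forall>y. Y0 \<le> y \<and> y \<le> Y1 \<longrightarrow> a y \<le> b y" using aP abound by blast
  have mo: "\<forall>y. Y0 \<le> y \<and> y < Y1 \<longrightarrow> a y \<le> a (y+1) \<and> b y \<le> b (y+1) \<and> a (y+1) \<le> b y"
  proof (intro allI impI conjI)
    fix y assume y: "Y0 \<le> y \<and> y < Y1"
    have in1: "(a (y+1), y+1) \<in> P" "(b (y+1), y+1) \<in> P" using aP bP y by auto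
    have in0: "(a y, y) \<in> P" "(b y, y) \<in> P" using aP bP y by auto
    show "a y \<le> a (y+1)"
    proof (rule ccontr)
      assume "\<not> a y \<le> a (y+1)"
      then have "a (y+1) \<le> b y" using ne y by force
      then have "box P (a (y+1)) (b y) y (y+1)" using NW[OF in1(1) in0(2)] nwseD by simp
      then have "(a (y+1), y) \<in> P" using `a (y+1) \<le> b y` unfolding box_def by simp
      then have "a y \<le> a (y+1)" using abound by blast
      then show False using `\<not> a y \<le> a (y+1)` by simp
    qed
    show "b y \<le> b (y+1)"
    proof (rule ccontr)
      assume nb: "\<not> b y \<le> b (y+1)"
      have "a (y+1) \<le> b (y+1)" using ne y by force
      then have "a (y+1) \<le> b y" using nb by simp
      then have "box P (a (y+1)) (b y) y (y+1)" using NW[OF in1(1) in0(2)] nwseD by simp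
      then have "(b y, y+1) \<in> P" using `a (y+1) \<le> b y` unfolding box_def by simp
      then have "b y \<le> b (y+1)" using abound by blast
      then show False using nb by simp
    qed
    obtain x where "(x,y) \<in> P" "(x,y+1) \<in> P" using cross y by blast
    then show "a (y+1) \<le> b y" using abound by force
  qed
  obtain p u l where "path_end p u = path_end p l \<and>
        set (path_points p u) \<inter> set (path_points p l) = {p, path_end p u} \<and>
        path_edges p u \<inter> path_edges p l = {} \<and>
        boundary_edges P = path_edges p u \<union> path_edges p l"
    using construct[OF Y ne mo Peq] by blast
  then show ?thesis unfolding parallelogram_polyomino_def using poly by blast
qed

theorem proposition14:
  shows "{P. parallelogram_polyomino P} =
         Av_P {mat_of_rows [[1, 0], [1, 1]], mat_of_rows [[1, 1], [0, 1]]}"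
  unfolding Av_eq using para_avoid avoid_para parallelogram_polyomino_def by blast

end
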